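(* For every positive integer $r$ there exists a partition $\mathbb N=A_1\cup A_2\cup\cdots\cup A_r$ into pairwise disjoint sets such that for every $1\le i\le r$ and every $n\ge0$, the set $A_i-n$ is a central set.
   Context: $\mathbb N=\{0,1,2,\dots\}$; for $A\subseteq\mathbb N$ and $n\in\mathbb N$, $A-n=\{m\in\mathbb N: m+n\in A\}$. $\beta\mathbb N$ is the set of ultrafilters on $\mathbb N$ with addition $A\in p+q$ iff $\{n:A-n\in p\}\in q$; a minimal idempotent is a non-principal ultrafilter $p$ with $p+p=p$ lying in the smallest two-sided ideal of $\beta\mathbb N$; a set is central if it belongs to some minimal idempotent. *)

theory Defs
  imports Main
begin

definition is_ultrafilter :: "nat set set \<Rightarrow> bool" where
  "is_ultrafilter U \<longleftrightarrow>
     UNIV \<in> U \<and> {} \<notin> U \<and>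
     (\<forall>A B. A \<in> U \<longrightarrow> A \<subseteq> B \<longrightarrow> B \<in> U) \<and>
     (\<forall>A B. A \<in> U \<longrightarrow> B \<in> U \<longrightarrow> A \<inter> B \<in> U) \<and>
     (\<forall>A. A \<in> U \<or> - A \<in> U)"

definition betaN :: "nat set set set" where
  "betaN = {U. is_ultrafilter U}"

definition shift :: "nat set \<Rightarrow> nat \<Rightarrow> nat set" where
  "shift A n = {m. m + n \<in> A}"

definition uplus :: "nat set set \<Rightarrow> nat set set \<Rightarrow> nat set set" where
  "uplus p q = {A. {n. shift A n \<in> p} \<in> q}"

definition principal :: "nat set set \<Rightarrow> bool" where
  "principal p \<longleftrightarrow> (\<exists>n. p = {A. n \<in> A})"

definition two_sided_ideal :: "nat set set set \<Rightarrow> bool" where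
  "two_sided_ideal I \<longleftrightarrow> I \<noteq> {} \<and> I \<subseteq> betaN \<and>
     (\<forall>p\<in>betaN. \<forall>q\<in>I. uplus p q \<in> I \<and> uplus q p \<in> I)"

definition smallest_ideal :: "nat set set set" where
  "smallest_ideal = \<Inter> {I. two_sided_ideal I}"

definition minimal_idempotent :: "nat set set \<Rightarrow> bool" where
  "minimal_idempotent p \<longleftrightarrow> p \<in> betaN \<and> \<not> principal p \<and> uplus p p = p \<and> p \<in> smallest_ideal"

definition central :: "nat set \<Rightarrow> bool" where
  "central A \<longleftrightarrow> (\<exists>p. minimal_idempotent p \<and> A \<in> p)"

end

theory Submission imports Defs "HOL-Library.Discrete_Functions" begin

lemma betaN_iff: "p \<in> betaN \<longleftrightarrow> is_ultrafilter p" by (simp add: betaN_def)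

lemma uf_UNIV: "is_ultrafilter p \<Longrightarrow> UNIV \<in> p" by (simp add: is_ultrafilter_def)
lemma uf_empty: "is_ultrafilter p \<Longrightarrow> {} \<notin> p" by (simp add: is_ultrafilter_def)
lemma uf_mono: "is_ultrafilter p \<Longrightarrow> A \<in> p \<Longrightarrow> A \<subseteq> B \<Longrightarrow> B \<in> p"
  unfolding is_ultrafilter_def by blast
lemma uf_int: "is_ultrafilter p \<Longrightarrow> (A \<inter> B \<in> p) = (A \<in> p \<and> B \<in> p)"
  unfolding is_ultrafilter_def by blast
lemma uf_compl: "is_ultrafilter p \<Longrightarrow> (- A \<in> p) = (A \<notin> p)"
proof -
  assume u: "is_ultrafilter p"
  have "\<not> (A \<in> p \<and> - A \<in> p)"
  proof
    assume "A \<in> p \<and> - A \<in> p"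
    then have "A \<inter> - A \<in> p" using uf_int[OF u] by blast
    then show False using uf_empty[OF u] by simp
  qed
  moreover have "A \<in> p \<or> - A \<in> p" using u unfolding is_ultrafilter_def by blast
  ultimately show ?thesis by blast
qed
lemma uf_ne: "is_ultrafilter p \<Longrightarrow> A \<in> p \<Longrightarrow> A \<noteq> {}"
  using uf_empty by blast
lemma uf_eq: "is_ultrafilter p \<Longrightarrow> is_ultrafilter q \<Longrightarrow> p \<subseteq> q \<Longrightarrow> p = q"
  using uf_compl by blast
lemma uf_Inter: assumes p: "is_ultrafilter p" and "finite G" "G \<subseteq> p" shows "\<Inter>G \<in> p"
  using assms(2,3)
proof (induction G rule: finite_induct)
  case empty then show ?case using uf_UNIV[OF p] by simp
next
  case (insert x F) then show ?case using uf_int[OF p] by simp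
qed

lemma shift_Int: "shift (A \<inter> B) n = shift A n \<inter> shift B n" by (auto simp: shift_def)
lemma shift_Compl: "shift (- A) n = - shift A n" by (auto simp: shift_def)
lemma shift_UNIV: "shift UNIV n = UNIV" by (auto simp: shift_def)
lemma shift_empty: "shift {} n = {}" by (auto simp: shift_def)
lemma shift_mono: "A \<subseteq> B \<Longrightarrow> shift A n \<subseteq> shift B n" by (auto simp: shift_def)
lemma shift_shift: "shift (shift A n) m = shift A (m + n)" by (auto simp: shift_def add.assoc)

lemma uplus_uf:
  assumes p: "is_ultrafilter p" and q: "is_ultrafilter q"
  shows "is_ultrafilter (uplus p q)"
proof -
  have i: "{n. shift (A \<inter> B) n \<in> p} = {n. shift A n \<in> p} \<inter> {n. shift B n \<in> p}" for A B
    using uf_int[OF p] by (auto simp: shift_Int)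
  have c: "{n. shift (- A) n \<in> p} = - {n. shift A n \<in> p}" for A
    using uf_compl[OF p] by (auto simp: shift_Compl)
  have m: "{n. shift A n \<in> p} \<subseteq> {n. shift B n \<in> p}" if "A \<subseteq> B" for A B
    using uf_mono[OF p] shift_mono[OF that] by blast
  show ?thesis unfolding is_ultrafilter_def uplus_def
    using uf_UNIV[OF p] uf_UNIV[OF q] uf_empty[OF p] uf_empty[OF q] uf_mono[OF q] uf_int[OF q]
      uf_compl[OF q] i c m
    by (auto simp: shift_UNIV shift_empty)
qed

lemma uplus_assoc: "uplus (uplus p q) s = uplus p (uplus q s)"
  by (simp add: uplus_def shift_def add.assoc)

definition fip :: "nat set set \<Rightarrow> bool" where
  "fip F \<longleftrightarrow> (\<forall>G. finite G \<longrightarrow> G \<subseteq> F \<longrightarrow> \<Inter>G \<noteq> {})"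

lemma fip_insert:
  assumes "\<And>G. finite G \<Longrightarrow> G \<subseteq> M \<Longrightarrow> X \<inter> \<Inter>G \<noteq> {}"
  shows "fip (insert X M)"
  unfolding fip_def
proof (intro allI impI)
  fix G assume G: "finite G" "G \<subseteq> insert X M"
  have "X \<inter> \<Inter>(G - {X}) \<noteq> {}" by (rule assms) (use G in auto)
  moreover have "X \<inter> \<Inter>(G - {X}) \<subseteq> \<Inter>G" by auto
  ultimately show "\<Inter>G \<noteq> {}" by blast
qed

lemma fip_insertD:
  assumes "fip (insert X M)" "finite G" "G \<subseteq> M"
  shows "X \<inter> \<Inter>G \<noteq> {}"
proof -
  have "finite (insert X G)" "insert X G \<subseteq> insert X M" using assms(2,3) by auto
  then have "\<Inter>(insert X G) \<noteq> {}" using assms(1) unfolding fip_def by blast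
  then show ?thesis by simp
qed

lemma uf_exists:
  assumes "fip F"
  shows "\<exists>p. is_ultrafilter p \<and> F \<subseteq> p"
proof -
  let ?A = "{G. F \<subseteq> G \<and> fip G}"
  have "\<exists>M\<in>?A. \<forall>X\<in>?A. M \<subseteq> X \<longrightarrow> X = M"
  proof (rule subset_Zorn_nonempty)
    show "?A \<noteq> {}" using assms by blast
  next
    fix \<C> assume ne: "\<C> \<noteq> {}" and ch: "subset.chain ?A \<C>"
    show "\<Union>\<C> \<in> ?A"
    proof
      obtain C0 where "C0 \<in> \<C>" using ne by blast
      then have "F \<subseteq> C0" using ch by (auto simp: subset_chain_def)
      then have "F \<subseteq> \<Union>\<C>" using \<open>C0 \<in> \<C>\<close> by blast
      moreover have "fip (\<Union>\<C>)"
        unfolding fip_def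
      proof (intro allI impI)
        fix G assume G: "finite G" "G \<subseteq> \<Union>\<C>"
        obtain B where "B \<in> \<C>" "G \<subseteq> B"
          using finite_subset_Union_chain[OF G ne ch] by blast
        moreover have "\<forall>B\<in>\<C>. fip B" using ch by (auto simp: subset_chain_def)
        ultimately have "fip B" by blast
        then show "\<Inter>G \<noteq> {}" using G(1) \<open>G \<subseteq> B\<close> unfolding fip_def by blast
      qed
      ultimately show "F \<subseteq> \<Union>\<C> \<and> fip (\<Union>\<C>)" by blast
    qed
  qed
  then obtain M where MA: "M \<in> ?A" and max0: "\<forall>X\<in>?A. M \<subseteq> X \<longrightarrow> X = M"
    by (elim bexE) 
  have FM: "F \<subseteq> M" and fM: "fip M" using MA by simp_all
  have key: "X \<in> M" if "fip (insert X M)" for X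
  proof -
    have "insert X M \<in> ?A" using that FM by blast
    then have "insert X M = M" using max0[rule_format, of "insert X M"] by blast
    then show ?thesis by blast
  qed
  have "is_ultrafilter M"
    unfolding is_ultrafilter_def
  proof (intro conjI allI impI)
    show "UNIV \<in> M"
    proof (rule key, rule fip_insert)
      fix G assume "finite G" "G \<subseteq> M"
      then show "UNIV \<inter> \<Inter>G \<noteq> {}" using fM[unfolded fip_def, rule_format, of G] by simp
    qed
    show "{} \<notin> M"
    proof
      assume "{} \<in> M"
      then have "{{}} \<subseteq> M" by simp
      moreover have "finite {{}::nat set}" by simp
      ultimately have "\<Inter>{{}} \<noteq> ({}::nat set)" using fM unfolding fip_def by blast
      then show False by simp
    qed
  next
    fix A B assume "A \<in> M" "A \<subseteq> B"
    show "B \<in> M"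
    proof (rule key, rule fip_insert)
      fix G assume "finite G" "G \<subseteq> M"
      then have "\<Inter>(insert A G) \<noteq> {}" using fM[unfolded fip_def, rule_format, of "insert A G"] \<open>A \<in> M\<close> by simp
      then show "B \<inter> \<Inter>G \<noteq> {}" using \<open>A \<subseteq> B\<close> by auto
    qed
  next
    fix A B assume "A \<in> M" "B \<in> M"
    show "A \<inter> B \<in> M"
    proof (rule key, rule fip_insert)
      fix G assume "finite G" "G \<subseteq> M"
      then have "\<Inter>(insert A (insert B G)) \<noteq> {}" using fM[unfolded fip_def, rule_format, of "insert A (insert B G)"] \<open>A \<in> M\<close> \<open>B \<in> M\<close> by simp
      then show "A \<inter> B \<inter> \<Inter>G \<noteq> {}" by auto
    qed
  next
    fix A
    show "A \<in> M \<or> - A \<in> M"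
    proof (rule ccontr)
      assume "\<not> (A \<in> M \<or> - A \<in> M)"
      then have n1: "\<not> fip (insert A M)" and n2: "\<not> fip (insert (- A) M)" using key by blast+
      have "\<exists>G. finite G \<and> G \<subseteq> M \<and> A \<inter> \<Inter>G = {}"
      proof (rule ccontr)
        assume "\<not> (\<exists>G. finite G \<and> G \<subseteq> M \<and> A \<inter> \<Inter>G = {})"
        then have "fip (insert (A) M)" by (intro fip_insert) auto
        with n1 show False by simp
      qed
      then obtain G1 where G1: "finite G1" "G1 \<subseteq> M" "A \<inter> \<Inter>G1 = {}" by blast
      have "\<exists>G. finite G \<and> G \<subseteq> M \<and> - A \<inter> \<Inter>G = {}"
      proof (rule ccontr)
        assume "\<not> (\<exists>G. finite G \<and> G \<subseteq> M \<and> - A \<inter> \<Inter>G = {})"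
        then have "fip (insert (- A) M)" by (intro fip_insert) auto
        with n2 show False by simp
      qed
      then obtain G2 where G2: "finite G2" "G2 \<subseteq> M" "- A \<inter> \<Inter>G2 = {}" by blast
      have "\<Inter>(G1 \<union> G2) = {}" using G1(3) G2(3) by auto
      moreover have "\<Inter>(G1 \<union> G2) \<noteq> {}" using fM[unfolded fip_def, rule_format, of "G1 \<union> G2"] G1 G2 by simp
      ultimately show False by blast
    qed
  qed
  then show ?thesis using FM by blast
qed

definition closedU :: "nat set set set \<Rightarrow> bool" where
  "closedU C \<longleftrightarrow> C \<subseteq> betaN \<and> (\<forall>p\<in>betaN. (\<forall>A\<in>p. \<exists>q\<in>C. A \<in> q) \<longrightarrow> p \<in> C)"

lemma closedU_betaN: "closedU betaN" unfolding closedU_def by blast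

lemma closedU_Inter:
  assumes "\<C> \<noteq> {}" "\<forall>C\<in>\<C>. closedU C"
  shows "closedU (\<Inter>\<C>)"
  unfolding closedU_def
proof (intro conjI ballI impI)
  obtain C0 where "C0 \<in> \<C>" using assms(1) by blast
  then have "C0 \<subseteq> betaN" using assms(2) unfolding closedU_def by blast
  then show "\<Inter>\<C> \<subseteq> betaN" using \<open>C0 \<in> \<C>\<close> by blast
next
  fix p assume p: "p \<in> betaN" "\<forall>A\<in>p. \<exists>q\<in>\<Inter>\<C>. A \<in> q"
  show "p \<in> \<Inter>\<C>"
  proof
    fix C assume C: "C \<in> \<C>"
    have "\<forall>A\<in>p. \<exists>q\<in>C. A \<in> q" using p(2) C by blast
    moreover have "closedU C" using assms(2) C by blast
    ultimately show "p \<in> C" using p(1) unfolding closedU_def by blast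
  qed
qed

lemma compact_chain:
  assumes ne: "\<C> \<noteq> {}" and cl: "\<forall>C\<in>\<C>. closedU C \<and> C \<noteq> {}"
    and ch: "\<forall>X\<in>\<C>. \<forall>Y\<in>\<C>. X \<subseteq> Y \<or> Y \<subseteq> X"
  shows "\<Inter>\<C> \<noteq> {}"
proof -
  let ?F = "{A. \<exists>C\<in>\<C>. \<forall>q\<in>C. A \<in> q}"
  have "fip ?F"
    unfolding fip_def
  proof (intro allI impI)
    fix G assume G: "finite G" "G \<subseteq> ?F"
    show "\<Inter>G \<noteq> {}"
    proof (cases "G = {}")
      case True then show ?thesis by simp
    next
      case False
      have "\<forall>A\<in>G. \<exists>C\<in>\<C>. \<forall>q\<in>C. A \<in> q" using G by blast
      then obtain c where c: "\<And>A. A \<in> G \<Longrightarrow> c A \<in> \<C> \<and> (\<forall>q\<in>c A. A \<in> q)" by metis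
      have "subset.chain \<C> (c ` G)" using c ch unfolding subset_chain_def by blast
      then have "\<Inter>(c ` G) \<in> c ` G" using Inter_in_chain[of "c ` G" \<C>] G False by blast
      then obtain A0 where A0: "A0 \<in> G" "\<Inter>(c ` G) = c A0" by blast
      then have "c A0 \<noteq> {}" using c[OF A0(1)] cl by blast
      then obtain q where q: "q \<in> c A0" by blast
      have "c A0 \<subseteq> betaN" using c[OF A0(1)] cl unfolding closedU_def by blast
      then have qu: "is_ultrafilter q" using q by (auto simp: betaN_def)
      have "G \<subseteq> q"
      proof
        fix A assume "A \<in> G"
        then have "q \<in> c A" using q A0(2) by blast
        then show "A \<in> q" using c \<open>A \<in> G\<close> by blast
      qed
      then have "\<Inter>G \<in> q" using uf_Inter[OF qu G(1)] by blast
      then show ?thesis using uf_ne[OF qu] by blast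
    qed
  qed
  then obtain p where p: "is_ultrafilter p" "?F \<subseteq> p" using uf_exists by blast
  have "p \<in> C" if C: "C \<in> \<C>" for C
  proof -
    have "\<forall>A\<in>p. \<exists>q\<in>C. A \<in> q"
    proof (rule ballI, rule ccontr)
      fix A assume A: "A \<in> p" "\<not> (\<exists>q\<in>C. A \<in> q)"
      have Cb: "C \<subseteq> betaN" using cl C unfolding closedU_def by blast
      have "\<forall>q\<in>C. - A \<in> q"
      proof
        fix q assume "q \<in> C"
        then have "is_ultrafilter q" "A \<notin> q" using Cb A(2) by (auto simp: betaN_def)
        then show "- A \<in> q" using uf_compl by blast
      qed
      then have "- A \<in> p" using p C by blast
      then show False using A(1) uf_compl[OF p(1)] by blast
    qed
    moreover have "p \<in> betaN" using p(1) by (simp add: betaN_def)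
    moreover have "closedU C" using cl C by blast
    ultimately show ?thesis unfolding closedU_def by blast
  qed
  then show ?thesis by blast
qed

lemma min_Zorn:
  assumes ne: "\<A> \<noteq> {}"
    and ch: "\<And>\<C>. \<C> \<noteq> {} \<Longrightarrow> \<C> \<subseteq> \<A> \<Longrightarrow> (\<forall>X\<in>\<C>. \<forall>Y\<in>\<C>. X \<subseteq> Y \<or> Y \<subseteq> X) \<Longrightarrow> \<Inter>\<C> \<in> \<A>"
  shows "\<exists>M\<in>\<A>. \<forall>X\<in>\<A>. X \<subseteq> M \<longrightarrow> X = M"
proof -
  have "\<exists>M\<in>uminus ` \<A>. \<forall>X\<in>uminus ` \<A>. M \<subseteq> X \<longrightarrow> X = M"
  proof (rule subset_Zorn_nonempty)
    show "uminus ` \<A> \<noteq> {}" using ne by simp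
  next
    fix \<C> assume cne: "\<C> \<noteq> {}" and cc: "subset.chain (uminus ` \<A>) \<C>"
    then have c1: "\<C> \<subseteq> uminus ` \<A>" and c2: "\<forall>X\<in>\<C>. \<forall>Y\<in>\<C>. X \<subseteq> Y \<or> Y \<subseteq> X"
      by (auto simp: subset_chain_def)
    have d1: "uminus ` \<C> \<subseteq> \<A>" using c1 by auto
    have d2: "\<forall>X\<in>uminus ` \<C>. \<forall>Y\<in>uminus ` \<C>. X \<subseteq> Y \<or> Y \<subseteq> X" using c2 by auto
    have h: "\<Inter>(uminus ` \<C>) \<in> \<A>" using ch[OF _ d1 d2] cne by simp
    have e: "\<Union>\<C> = - \<Inter>(uminus ` \<C>)" by auto
    show "\<Union>\<C> \<in> uminus ` \<A>" using image_eqI[where f=uminus, OF e h] .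
  qed
  then obtain M where M: "M \<in> \<A>" "\<forall>X\<in>\<A>. - M \<subseteq> - X \<longrightarrow> - X = - M" by auto
  then show ?thesis by (metis Compl_subset_Compl_iff compl_eq_compl_iff)
qed

lemma Bs_Int: "is_ultrafilter x \<Longrightarrow> {n. shift (A \<inter> A') n \<in> x} = {n. shift A n \<in> x} \<inter> {n. shift A' n \<in> x}"
  using uf_int by (auto simp: shift_Int)

lemma closedU_sub: "closedU M \<Longrightarrow> u \<in> M \<Longrightarrow> is_ultrafilter u"
  unfolding closedU_def betaN_def by blast

lemma image_closed:
  assumes x: "is_ultrafilter x" and M: "closedU M"
  shows "closedU (uplus x ` M)"
  unfolding closedU_def
proof (intro conjI ballI impI)
  have Mu: "\<And>u. u \<in> M \<Longrightarrow> is_ultrafilter u" using M closedU_sub by blast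
  show "uplus x ` M \<subseteq> betaN" using Mu uplus_uf[OF x] by (auto simp: betaN_def)
next
  fix z assume zb: "z \<in> betaN" and zc: "\<forall>A\<in>z. \<exists>q\<in>uplus x ` M. A \<in> q"
  have zu: "is_ultrafilter z" using zb by (simp add: betaN_def)
  have Mu: "\<And>u. u \<in> M \<Longrightarrow> is_ultrafilter u" using M closedU_sub by blast
  define D where "D = {E. \<forall>u\<in>M. E \<in> u}"
  define F where "F = (\<lambda>A. {n. shift A n \<in> x}) ` z \<union> D"
  have key: "\<exists>A\<in>z. \<exists>E\<in>D. {n. shift A n \<in> x} \<inter> E \<subseteq> \<Inter>G" if "finite G" "G \<subseteq> F" for G
    using that
  proof (induction G rule: finite_induct)
    case empty
    have "UNIV \<in> z" using uf_UNIV[OF zu] .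
    moreover have "UNIV \<in> D" using Mu uf_UNIV unfolding D_def by blast
    ultimately show ?case by blast
  next
    case (insert X G)
    have GF: "G \<subseteq> F" using insert.prems by simp
    obtain A E where AE: "A \<in> z" "E \<in> D" "{n. shift A n \<in> x} \<inter> E \<subseteq> \<Inter>G"
      using insert.IH[OF GF] by (elim bexE)
    from insert.prems have XF: "X \<in> F" by simp
    show ?case
    proof (cases "X \<in> D")
      case True
      have "E \<inter> X \<in> D" unfolding D_def
      proof
        show "\<forall>u\<in>M. E \<inter> X \<in> u"
        proof
          fix u assume "u \<in> M"
          then have "E \<in> u" "X \<in> u" using AE(2) True unfolding D_def by blast+
          then show "E \<inter> X \<in> u" using uf_int[OF Mu[OF \<open>u \<in> M\<close>]] by blast
        qed
      qed
      moreover have "{n. shift A n \<in> x} \<inter> (E \<inter> X) \<subseteq> \<Inter>(insert X G)" using AE(3) by blast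
      ultimately show ?thesis using AE(1) by blast
    next
      case False
      then obtain A' where A': "A' \<in> z" "X = {n. shift A' n \<in> x}" using XF unfolding F_def by blast
      have "A \<inter> A' \<in> z" using AE(1) A'(1) uf_int[OF zu] by blast
      moreover have "{n. shift (A \<inter> A') n \<in> x} \<inter> E \<subseteq> \<Inter>(insert X G)"
      proof -
        have eq: "{n. shift (A \<inter> A') n \<in> x} = {n. shift A n \<in> x} \<inter> X"
          using Bs_Int[OF x, of A A'] A'(2) by simp
        show ?thesis unfolding eq using AE(3) by auto
      qed
      ultimately show ?thesis using AE(2) by blast
    qed
  qed
  have "fip F" unfolding fip_def
  proof (intro allI impI)
    fix G assume "finite G" "G \<subseteq> F"
    then obtain A E where AE: "A \<in> z" "E \<in> D" "{n. shift A n \<in> x} \<inter> E \<subseteq> \<Inter>G" using key by blast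
    from zc AE(1) obtain u where u: "u \<in> M" "A \<in> uplus x u" by blast
    have "{n. shift A n \<in> x} \<in> u" using u(2) by (simp add: uplus_def)
    moreover have "E \<in> u" using AE(2) u(1) unfolding D_def by blast
    ultimately have "{n. shift A n \<in> x} \<inter> E \<in> u" using uf_int Mu[OF u(1)] by blast
    then have "{n. shift A n \<in> x} \<inter> E \<noteq> {}" using uf_ne Mu[OF u(1)] by blast
    then show "\<Inter>G \<noteq> {}" using AE(3) by blast
  qed
  then obtain u where u: "is_ultrafilter u" "F \<subseteq> u" using uf_exists by blast
  have "u \<in> M"
  proof -
    have "\<forall>E\<in>u. \<exists>q\<in>M. E \<in> q"
    proof (rule ballI, rule ccontr)
      fix E assume E: "E \<in> u" "\<not> (\<exists>q\<in>M. E \<in> q)"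
      have "- E \<in> D" unfolding D_def using E(2) Mu uf_compl by blast
      then have "- E \<in> u" using u(2) unfolding F_def by blast
      then show False using E(1) uf_compl[OF u(1)] by blast
    qed
    moreover have "u \<in> betaN" using u(1) by (simp add: betaN_def)
    ultimately show ?thesis using M unfolding closedU_def by blast
  qed
  moreover have "z = uplus x u"
  proof (rule uf_eq[OF zu uplus_uf[OF x u(1)]])
    show "z \<subseteq> uplus x u"
    proof
      fix A assume "A \<in> z"
      then have "{n. shift A n \<in> x} \<in> u" using u(2) unfolding F_def by blast
      then show "A \<in> uplus x u" by (simp add: uplus_def)
    qed
  qed
  ultimately show "z \<in> uplus x ` M" by blast
qed

lemma closed_fix:
  assumes p: "is_ultrafilter p" and M: "closedU M"
  shows "closedU {q\<in>M. uplus p q = p}"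
  unfolding closedU_def
proof (intro conjI ballI impI)
  show "{q\<in>M. uplus p q = p} \<subseteq> betaN" using M unfolding closedU_def by blast
next
  fix z assume zb: "z \<in> betaN" and zc: "\<forall>A\<in>z. \<exists>q\<in>{q\<in>M. uplus p q = p}. A \<in> q"
  have zu: "is_ultrafilter z" using zb by (simp add: betaN_def)
  have Mu: "\<And>u. u \<in> M \<Longrightarrow> is_ultrafilter u" using M closedU_sub by blast
  have "\<forall>A\<in>z. \<exists>q\<in>M. A \<in> q" using zc by blast
  then have "z \<in> M" using zb M unfolding closedU_def by blast
  moreover have "uplus p z = p"
  proof (rule sym, rule uf_eq[OF p uplus_uf[OF p zu]])
    show "p \<subseteq> uplus p z"
    proof
      fix A assume A: "A \<in> p"
      show "A \<in> uplus p z"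
      proof (rule ccontr)
        assume "A \<notin> uplus p z"
        then have "{n. shift A n \<in> p} \<notin> z" by (simp add: uplus_def)
        then have "- {n. shift A n \<in> p} \<in> z" using uf_compl[OF zu] by blast
        then obtain q where q: "q \<in> M" "uplus p q = p" "- {n. shift A n \<in> p} \<in> q" using zc by blast
        have "A \<in> uplus p q" using A q(2) by simp
        then have "{n. shift A n \<in> p} \<in> q" by (simp add: uplus_def)
        then show False using q(3) uf_compl Mu[OF q(1)] by blast
      qed
    qed
  qed
  ultimately show "z \<in> {q\<in>M. uplus p q = p}" by blast
qed

definition subsg :: "nat set set set \<Rightarrow> bool" where
  "subsg S \<longleftrightarrow> (\<forall>a\<in>S. \<forall>b\<in>S. uplus a b \<in> S)"

lemma ellis:
  assumes T: "closedU T" "T \<noteq> {}" "subsg T"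
  shows "\<exists>e\<in>T. uplus e e = e"
proof -
  let ?A = "{S. S \<subseteq> T \<and> closedU S \<and> S \<noteq> {} \<and> subsg S}"
  have "\<exists>M\<in>?A. \<forall>X\<in>?A. X \<subseteq> M \<longrightarrow> X = M"
  proof (rule min_Zorn)
    show "?A \<noteq> {}" using T by blast
  next
    fix \<C> assume c: "\<C> \<noteq> {}" "\<C> \<subseteq> ?A" "\<forall>X\<in>\<C>. \<forall>Y\<in>\<C>. X \<subseteq> Y \<or> Y \<subseteq> X"
    have cl: "\<forall>C\<in>\<C>. closedU C \<and> C \<noteq> {}" using c(2) by blast
    have "\<Inter>\<C> \<subseteq> T" using c(1,2) by blast
    moreover have "closedU (\<Inter>\<C>)" using closedU_Inter[OF c(1)] cl by blast
    moreover have "\<Inter>\<C> \<noteq> {}" using compact_chain[OF c(1) cl c(3)] .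
    moreover have "subsg (\<Inter>\<C>)" using c(2) unfolding subsg_def by blast
    ultimately show "\<Inter>\<C> \<in> ?A" by blast
  qed
  then obtain M where MA: "M \<in> ?A" and min: "\<forall>X\<in>?A. X \<subseteq> M \<longrightarrow> X = M" by (elim bexE)
  then have MT: "M \<subseteq> T" and Mc: "closedU M" and Mne: "M \<noteq> {}" and Ms: "subsg M" by simp_all
  obtain p where pM: "p \<in> M" using Mne by blast
  have Mu: "\<And>u. u \<in> M \<Longrightarrow> is_ultrafilter u" using Mc closedU_sub by blast
  have pu: "is_ultrafilter p" using Mu pM by blast
  let ?S1 = "uplus p ` M"
  have S1M: "?S1 \<subseteq> M" using Ms pM unfolding subsg_def by blast
  have "subsg ?S1"
    unfolding subsg_def
  proof (intro ballI)
    fix a' b' assume "a' \<in> ?S1" "b' \<in> ?S1"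
    then obtain a b where ab: "a \<in> M" "b \<in> M" "a' = uplus p a" "b' = uplus p b" by blast
    have "uplus a (uplus p b) \<in> M" using Ms ab pM unfolding subsg_def by blast
    moreover have "uplus a' b' = uplus p (uplus a (uplus p b))" using ab by (simp add: uplus_assoc)
    ultimately show "uplus a' b' \<in> ?S1" by blast
  qed
  moreover have "closedU ?S1" using image_closed[OF pu Mc] .
  moreover have "?S1 \<noteq> {}" using pM by blast
  ultimately have "?S1 \<in> ?A" using subset_trans[OF S1M MT] by (intro CollectI conjI)
  then have S1eq: "?S1 = M" using min[rule_format, OF _ S1M] by blast
  have "p \<in> ?S1" using pM S1eq by simp
  then obtain q where q: "q \<in> M" "p = uplus p q" by (elim imageE)
  let ?S2 = "{q\<in>M. uplus p q = p}"
  have S2M: "?S2 \<subseteq> M" by blast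
  have "subsg ?S2"
    unfolding subsg_def
  proof (intro ballI)
    fix a b assume "a \<in> ?S2" "b \<in> ?S2"
    then have ab: "a \<in> M" "b \<in> M" "uplus p a = p" "uplus p b = p" by auto
    have "uplus a b \<in> M" using Ms ab unfolding subsg_def by blast
    moreover have "uplus p (uplus a b) = p" using ab by (simp add: uplus_assoc[symmetric])
    ultimately show "uplus a b \<in> ?S2" by blast
  qed
  moreover have "closedU ?S2" using closed_fix[OF pu Mc] .
  moreover have "?S2 \<noteq> {}" using q by auto
  ultimately have "?S2 \<in> ?A" using subset_trans[OF S2M MT] by (intro CollectI conjI)
  then have "?S2 = M" using min[rule_format, OF _ S2M] by blast
  then have "p \<in> ?S2" using pM by simp
  then have "uplus p p = p" by simp
  then show ?thesis using pM MT by blast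
qed

definition rideal :: "nat set set set \<Rightarrow> bool" where
  "rideal S \<longleftrightarrow> (\<forall>x\<in>S. \<forall>u\<in>betaN. uplus x u \<in> S)"

lemma principal_iff:
  assumes p: "is_ultrafilter p"
  shows "principal p \<longleftrightarrow> (\<exists>n. {n} \<in> p)"
proof
  assume "principal p"
  then obtain n where "p = {A. n \<in> A}" unfolding principal_def by blast
  then show "\<exists>n. {n} \<in> p" by auto
next
  assume "\<exists>n. {n} \<in> p"
  then obtain n where n: "{n} \<in> p" by blast
  have "p = {A. n \<in> A}"
  proof (intro set_eqI iffI)
    fix A assume "A \<in> p"
    then have "A \<inter> {n} \<in> p" using n uf_int[OF p] by blast
    then have "A \<inter> {n} \<noteq> {}" using uf_ne[OF p] by blast
    then show "A \<in> {A. n \<in> A}" by auto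
  next
    fix A assume "A \<in> {A. n \<in> A}"
    then have "{n} \<subseteq> A" by auto
    then show "A \<in> p" using uf_mono[OF p n] by blast
  qed
  then show "principal p" unfolding principal_def by blast
qed

lemma nonprinc_finite:
  assumes p: "is_ultrafilter p" and np: "\<not> principal p" and F: "finite F"
  shows "F \<notin> p"
  using F
proof (induction F rule: finite_induct)
  case empty then show ?case using uf_empty[OF p] .
next
  case (insert a F)
  show ?case
  proof
    assume ins: "insert a F \<in> p"
    have "{a} \<notin> p" using np principal_iff[OF p] by blast
    then have "- {a} \<in> p" using uf_compl[OF p] by blast
    then have "insert a F \<inter> - {a} \<in> p" using ins uf_int[OF p] by blast
    moreover have "insert a F \<inter> - {a} \<subseteq> F" by auto
    ultimately have "F \<in> p" using uf_mono[OF p] by blast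
    then show False using insert.IH by blast
  qed
qed

definition Nstar :: "nat set set set" where
  "Nstar = {p\<in>betaN. \<not> principal p}"

lemma Nstar_ideal:
  assumes ne: "Nstar \<noteq> {}"
  shows "two_sided_ideal Nstar"
  unfolding two_sided_ideal_def
proof (intro conjI ballI)
  show "Nstar \<noteq> {}" by (rule ne)
  show "Nstar \<subseteq> betaN" unfolding Nstar_def by blast
next
  fix p q assume pb: "p \<in> betaN" and qN: "q \<in> Nstar"
  have pu: "is_ultrafilter p" using pb by (simp add: betaN_def)
  have qu: "is_ultrafilter q" and qnp: "\<not> principal q" using qN by (simp_all add: Nstar_def betaN_def)
  have fin: "finite (shift {k} n)" for k n
  proof -
    have "shift {k} n \<subseteq> {..k}" by (auto simp: shift_def)
    then show ?thesis by (rule finite_subset) simp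
  qed
  have pqu: "is_ultrafilter (uplus p q)" using uplus_uf[OF pu qu] .
  have qpu: "is_ultrafilter (uplus q p)" using uplus_uf[OF qu pu] .
  have "\<not> principal (uplus p q)"
  proof -
    have "{k} \<notin> uplus p q" for k
    proof
      assume "{k} \<in> uplus p q"
      then have S: "{n. shift {k} n \<in> p} \<in> q" by (simp add: uplus_def)
      have "{n. shift {k} n \<in> p} \<subseteq> {..k}"
      proof
        fix n assume "n \<in> {n. shift {k} n \<in> p}"
        then have "shift {k} n \<noteq> {}" using uf_ne[OF pu] by blast
        then show "n \<in> {..k}" by (auto simp: shift_def)
      qed
      then have "{..k} \<in> q" using uf_mono[OF qu S] by blast
      then show False using nonprinc_finite[OF qu qnp] by simp
    qed
    then show ?thesis using principal_iff[OF pqu] by blast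
  qed
  then show "uplus p q \<in> Nstar" using pqu by (simp add: Nstar_def betaN_def)
  have "\<not> principal (uplus q p)"
  proof -
    have "{k} \<notin> uplus q p" for k
    proof
      assume "{k} \<in> uplus q p"
      then have S: "{n. shift {k} n \<in> q} \<in> p" by (simp add: uplus_def)
      have "{n. shift {k} n \<in> q} = {}" using nonprinc_finite[OF qu qnp fin] by blast
      then show False using S uf_empty[OF pu] by simp
    qed
    then show ?thesis using principal_iff[OF qpu] by blast
  qed
  then show "uplus q p \<in> Nstar" using qpu by (simp add: Nstar_def betaN_def)
qed

lemma exists_min_idem:
  assumes Wc: "closedU W" and Wne: "W \<noteq> {}" and Wr: "rideal W" and ns: "Nstar \<noteq> {}"
  shows "\<exists>q\<in>W. minimal_idempotent q"
proof -
  let ?A = "{S. S \<subseteq> W \<and> closedU S \<and> S \<noteq> {} \<and> rideal S}"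
  have "\<exists>M\<in>?A. \<forall>X\<in>?A. X \<subseteq> M \<longrightarrow> X = M"
  proof (rule min_Zorn)
    show "?A \<noteq> {}" using Wc Wne Wr by blast
  next
    fix \<C> assume c: "\<C> \<noteq> {}" "\<C> \<subseteq> ?A" "\<forall>X\<in>\<C>. \<forall>Y\<in>\<C>. X \<subseteq> Y \<or> Y \<subseteq> X"
    have cl: "\<forall>C\<in>\<C>. closedU C \<and> C \<noteq> {}" using c(2) by blast
    have "\<Inter>\<C> \<subseteq> W" using c(1,2) by blast
    moreover have "closedU (\<Inter>\<C>)" using closedU_Inter[OF c(1)] cl by blast
    moreover have "\<Inter>\<C> \<noteq> {}" using compact_chain[OF c(1) cl c(3)] .
    moreover have "rideal (\<Inter>\<C>)" using c(2) unfolding rideal_def by blast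
    ultimately show "\<Inter>\<C> \<in> ?A" by (intro CollectI conjI)
  qed
  then obtain R where RA: "R \<in> ?A" and min: "\<forall>X\<in>?A. X \<subseteq> R \<longrightarrow> X = R" by (elim bexE)
  then have RW: "R \<subseteq> W" and Rc: "closedU R" and Rne: "R \<noteq> {}" and Rr: "rideal R" by simp_all
  have Rb: "R \<subseteq> betaN" using Rc unfolding closedU_def by blast
  have "subsg R" using Rr Rb unfolding subsg_def rideal_def by blast
  then obtain e where e: "e \<in> R" "uplus e e = e" using ellis[OF Rc Rne] by blast
  have eb: "e \<in> betaN" using e(1) Rb by blast
  have eK: "e \<in> smallest_ideal"
    unfolding smallest_ideal_def
  proof
    fix I assume "I \<in> {I. two_sided_ideal I}"
    then have I: "I \<noteq> {}" "I \<subseteq> betaN" "\<forall>p\<in>betaN. \<forall>q\<in>I. uplus p q \<in> I \<and> uplus q p \<in> I"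
      by (simp_all add: two_sided_ideal_def)
    obtain y where yI: "y \<in> I" using I(1) by blast
    have yb: "y \<in> betaN" using I(2) yI by blast
    define z where "z = uplus e y"
    have zI: "z \<in> I" using I(3) eb yI unfolding z_def by blast
    have zR: "z \<in> R" using Rr e(1) yb unfolding rideal_def z_def by blast
    have zu: "is_ultrafilter z" using zR Rb by (auto simp: betaN_def)
    let ?S = "uplus z ` betaN"
    have SR: "?S \<subseteq> R" using Rr zR unfolding rideal_def by blast
    have "rideal ?S"
      unfolding rideal_def
    proof (intro ballI)
      fix w v assume "w \<in> ?S" "v \<in> betaN"
      then obtain u where u: "u \<in> betaN" "w = uplus z u" by blast
      have "uplus u v \<in> betaN" using u(1) \<open>v \<in> betaN\<close> uplus_uf by (simp add: betaN_def)
      moreover have "uplus w v = uplus z (uplus u v)" using u(2) by (simp add: uplus_assoc)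
      ultimately show "uplus w v \<in> ?S" by blast
    qed
    moreover have "closedU ?S" using image_closed[OF zu closedU_betaN] .
    moreover have "?S \<noteq> {}" using Rne Rb by blast
    ultimately have "?S \<in> ?A" using subset_trans[OF SR RW] by (intro CollectI conjI)
    then have "?S = R" using min[rule_format, OF _ SR] by blast
    then have "e \<in> ?S" using e(1) by simp
    then obtain u where u: "u \<in> betaN" "e = uplus z u" by blast
    then show "e \<in> I" using I(3) zI by simp
  qed
  have "smallest_ideal \<subseteq> Nstar"
    unfolding smallest_ideal_def using Nstar_ideal[OF ns] by blast
  then have "\<not> principal e" using eK unfolding Nstar_def by blast
  then have "minimal_idempotent e" using eb e(2) eK unfolding minimal_idempotent_def by blast
  then show ?thesis using e(1) RW by blast
qed

definition Aset :: "nat \<Rightarrow> nat \<Rightarrow> nat set" where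
  "Aset r i = {m. floor_sqrt m mod r = i - 1}"

definition Tset :: "nat \<Rightarrow> nat \<Rightarrow> nat \<Rightarrow> nat set" where
  "Tset r i N = {m. \<exists>j. m = j * j \<and> j mod r = i - 1 \<and> N \<le> j}"

definition Wset :: "nat \<Rightarrow> nat \<Rightarrow> nat set set set" where
  "Wset r i = {x\<in>betaN. \<forall>n. shift (Aset r i) n \<in> x}"

lemma T_sub: "Tset r i n \<subseteq> shift (Aset r i) n"
proof
  fix m assume "m \<in> Tset r i n"
  then obtain j where j: "m = j * j" "j mod r = i - 1" "n \<le> j" unfolding Tset_def by blast
  have "floor_sqrt (m + n) = j"
  proof (rule floor_sqrt_unique)
    show "j^2 \<le> m + n" using j by (simp add: power2_eq_square)
    show "m + n < (Suc j)^2" using j by (simp add: power2_eq_square)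
  qed
  then show "m \<in> shift (Aset r i) n" using j(2) by (simp add: shift_def Aset_def)
qed

lemma T_ne:
  assumes "1 \<le> i" "i \<le> r"
  shows "Tset r i N \<noteq> {}"
proof -
  define j where "j = N * r + (i - 1)"
  have "j mod r = (i - 1) mod r" unfolding j_def by simp
  also have "\<dots> = i - 1" using assms by simp
  finally have "j mod r = i - 1" .
  moreover have "N \<le> j"
  proof -
    have "1 \<le> r" using assms by simp
    then have "N * 1 \<le> N * r" by (rule mult_le_mono2)
    then have "N \<le> N * r" by simp
    then show ?thesis unfolding j_def by (rule trans_le_add1)
  qed
  ultimately have "j * j \<in> Tset r i N" unfolding Tset_def by blast
  then show ?thesis by blast
qed

lemma T_anti: "N \<le> N' \<Longrightarrow> Tset r i N' \<subseteq> Tset r i N"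
  unfolding Tset_def by force

lemma exists_p:
  assumes "1 \<le> i" "i \<le> r"
  shows "\<exists>p. is_ultrafilter p \<and> \<not> principal p \<and> p \<in> Wset r i"
proof -
  have "fip (range (Tset r i))"
    unfolding fip_def
  proof (intro allI impI)
    fix G assume G: "finite G" "G \<subseteq> range (Tset r i)"
    then obtain K where K: "finite K" "G = Tset r i ` K" using finite_subset_image by metis
    define N where "N = Max (insert 0 K)"
    have "Tset r i N \<subseteq> \<Inter>G"
    proof
      fix m assume m: "m \<in> Tset r i N"
      show "m \<in> \<Inter>G"
      proof
        fix X assume "X \<in> G"
        then obtain k where k: "k \<in> K" "X = Tset r i k" using K(2) by blast
        have "k \<le> N" unfolding N_def using K(1) k(1) by simp
        then show "m \<in> X" using T_anti[of k N r i] m k(2) by blast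
      qed
    qed
    then show "\<Inter>G \<noteq> {}" using T_ne[OF assms, of N] by blast
  qed
  then obtain p where p: "is_ultrafilter p" "range (Tset r i) \<subseteq> p" using uf_exists by blast
  have TP: "Tset r i N \<in> p" for N using p(2) by blast
  have "\<not> principal p"
  proof -
    have "{k} \<notin> p" for k
    proof
      assume "{k} \<in> p"
      then have "{k} \<inter> Tset r i (Suc k) \<in> p" using TP uf_int[OF p(1)] by blast
      moreover have "{k} \<inter> Tset r i (Suc k) = {}"
      proof -
        have "m \<noteq> k" if mT: "m \<in> Tset r i (Suc k)" for m
        proof -
          obtain j where j: "m = j * j" "Suc k \<le> j" using mT unfolding Tset_def by blast
          have "j \<le> j * j" using j(2) by simp
          then show ?thesis using j by linarith
        qed
        then show ?thesis by blast
      qed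
      ultimately show False using uf_empty[OF p(1)] by simp
    qed
    then show ?thesis using principal_iff[OF p(1)] by blast
  qed
  moreover have "p \<in> Wset r i"
    unfolding Wset_def
  proof (intro CollectI conjI allI)
    show "p \<in> betaN" using p(1) by (simp add: betaN_def)
    fix n show "shift (Aset r i) n \<in> p" using uf_mono[OF p(1) TP T_sub] .
  qed
  ultimately show ?thesis using p(1) by blast
qed

lemma W_closed: "closedU (Wset r i)"
  unfolding closedU_def
proof (intro conjI ballI impI)
  show "Wset r i \<subseteq> betaN" unfolding Wset_def by blast
next
  fix z assume zb: "z \<in> betaN" and zc: "\<forall>A\<in>z. \<exists>q\<in>Wset r i. A \<in> q"
  have zu: "is_ultrafilter z" using zb by (simp add: betaN_def)
  have "shift (Aset r i) n \<in> z" for n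
  proof (rule ccontr)
    assume "shift (Aset r i) n \<notin> z"
    then have "- shift (Aset r i) n \<in> z" using uf_compl[OF zu] by blast
    then obtain q where q: "q \<in> Wset r i" "- shift (Aset r i) n \<in> q" using zc by blast
    have qu: "is_ultrafilter q" and "shift (Aset r i) n \<in> q" using q(1) unfolding Wset_def betaN_def by blast+
    then show False using q(2) uf_compl[OF qu] by blast
  qed
  then show "z \<in> Wset r i" using zb unfolding Wset_def by blast
qed

lemma W_rideal: "rideal (Wset r i)"
  unfolding rideal_def
proof (intro ballI)
  fix x u assume x: "x \<in> Wset r i" and u: "u \<in> betaN"
  have xu: "is_ultrafilter x" using x unfolding Wset_def betaN_def by blast
  have uu: "is_ultrafilter u" using u by (simp add: betaN_def)
  have "shift (Aset r i) n \<in> uplus x u" for n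
  proof -
    have "{m. shift (shift (Aset r i) n) m \<in> x} = UNIV"
      using x unfolding Wset_def by (simp add: shift_shift)
    then show ?thesis using uf_UNIV[OF uu] by (simp add: uplus_def)
  qed
  moreover have "uplus x u \<in> betaN" using uplus_uf[OF xu uu] by (simp add: betaN_def)
  ultimately show "uplus x u \<in> Wset r i" unfolding Wset_def by blast
qed

theorem theorem7:
  fixes r :: nat
  assumes "r \<ge> 1"
  shows "\<exists>A :: nat \<Rightarrow> nat set.
           (\<Union>i\<in>{1..r}. A i) = UNIV \<and>
           (\<forall>i\<in>{1..r}. \<forall>j\<in>{1..r}. i \<noteq> j \<longrightarrow> A i \<inter> A j = {}) \<and>
           (\<forall>i\<in>{1..r}. \<forall>n. central (shift (A i) n))"
proof (intro exI conjI)
  show "(\<Union>i\<in>{1..r}. Aset r i) = UNIV"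
  proof (intro set_eqI iffI)
    fix m :: nat
    define i where "i = floor_sqrt m mod r + 1"
    have "i \<in> {1..r}" unfolding i_def using assms
      by (simp add: Suc_leI)
    moreover have "m \<in> Aset r i" unfolding i_def Aset_def by simp
    ultimately show "m \<in> (\<Union>i\<in>{1..r}. Aset r i)" by blast
  qed simp
  show "\<forall>i\<in>{1..r}. \<forall>j\<in>{1..r}. i \<noteq> j \<longrightarrow> Aset r i \<inter> Aset r j = {}"
    unfolding Aset_def by auto
  have ns: "Nstar \<noteq> {}"
  proof -
    obtain p where "is_ultrafilter p" "\<not> principal p" using exists_p[of 1 r] assms by auto
    then have "p \<in> Nstar" unfolding Nstar_def betaN_def by blast
    then show ?thesis by blast
  qed
  show "\<forall>i\<in>{1..r}. \<forall>n. central (shift (Aset r i) n)"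
  proof (intro ballI allI)
    fix i n assume i: "i \<in> {1..r}"
    then obtain p where "p \<in> Wset r i" using exists_p[of i r] by auto
    then have Wne: "Wset r i \<noteq> {}" by blast
    obtain q where q: "q \<in> Wset r i" "minimal_idempotent q"
      using exists_min_idem[OF W_closed Wne W_rideal ns] by blast
    have "shift (Aset r i) n \<in> q" using q(1) unfolding Wset_def by blast
    then show "central (shift (Aset r i) n)" unfolding central_def using q(2) by blast
  qed
qed

end
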